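(* A residuated lattice $L$ is a BL-algebra if and only if for all $x,y,z\in L$, $$[x\odot(x\rightarrow y)]\rightarrow z=(x\rightarrow z)\vee(y\rightarrow z).$$
   Context: A (commutative) residuated lattice is an algebra $(L,\wedge,\vee,\odot,\rightarrow,0,1)$ such that $(L,\wedge,\vee,0,1)$ is a bounded lattice, $(L,\odot,1)$ is a commutative ordered monoid, and $z\leq x\rightarrow y$ iff $x\odot z\leq y$ for all $x,y,z\in L$. A BL-algebra is a residuated lattice satisfying prelinearity $(x\rightarrow y)\vee(y\rightarrow x)=1$ and divisibility $x\odot(x\rightarrow y)=x\wedge y$ for all $x,y$. *)

theory Defs
  imports Main
begin

definition rl_le :: "('a \<Rightarrow> 'a \<Rightarrow> 'a) \<Rightarrow> 'a \<Rightarrow> 'a \<Rightarrow> bool" where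
  "rl_le meet x y \<longleftrightarrow> meet x y = x"

definition residuated_lattice ::
  "'a set \<Rightarrow> ('a \<Rightarrow> 'a \<Rightarrow> 'a) \<Rightarrow> ('a \<Rightarrow> 'a \<Rightarrow> 'a) \<Rightarrow> ('a \<Rightarrow> 'a \<Rightarrow> 'a)
    \<Rightarrow> ('a \<Rightarrow> 'a \<Rightarrow> 'a) \<Rightarrow> 'a \<Rightarrow> 'a \<Rightarrow> bool" where
  "residuated_lattice L meet join odot imp zero one \<longleftrightarrow>
     \<comment> \<open>closure\<close>
     zero \<in> L \<and> one \<in> L \<and>
     (\<forall>x\<in>L. \<forall>y\<in>L. meet x y \<in> L \<and> join x y \<in> L \<and> odot x y \<in> L \<and> imp x y \<in> L) \<and>
     \<comment> \<open>lattice axioms\<close>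
     (\<forall>x\<in>L. \<forall>y\<in>L. meet x y = meet y x \<and> join x y = join y x) \<and>
     (\<forall>x\<in>L. \<forall>y\<in>L. \<forall>z\<in>L. meet x (meet y z) = meet (meet x y) z \<and>
                           join x (join y z) = join (join x y) z) \<and>
     (\<forall>x\<in>L. \<forall>y\<in>L. meet x (join x y) = x \<and> join x (meet x y) = x) \<and>
     \<comment> \<open>bounds\<close>
     (\<forall>x\<in>L. rl_le meet zero x \<and> rl_le meet x one) \<and>
     \<comment> \<open>commutative monoid with unit one\<close>
     (\<forall>x\<in>L. \<forall>y\<in>L. odot x y = odot y x) \<and>
     (\<forall>x\<in>L. \<forall>y\<in>L. \<forall>z\<in>L. odot x (odot y z) = odot (odot x y) z) \<and>
     (\<forall>x\<in>L. odot x one = x) \<and>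
     \<comment> \<open>ordered monoid\<close>
     (\<forall>x\<in>L. \<forall>y\<in>L. \<forall>z\<in>L. rl_le meet x y \<longrightarrow> rl_le meet (odot x z) (odot y z)) \<and>
     \<comment> \<open>residuation\<close>
     (\<forall>x\<in>L. \<forall>y\<in>L. \<forall>z\<in>L. rl_le meet z (imp x y) \<longleftrightarrow> rl_le meet (odot x z) y)"

definition BL_algebra ::
  "'a set \<Rightarrow> ('a \<Rightarrow> 'a \<Rightarrow> 'a) \<Rightarrow> ('a \<Rightarrow> 'a \<Rightarrow> 'a) \<Rightarrow> ('a \<Rightarrow> 'a \<Rightarrow> 'a)
    \<Rightarrow> ('a \<Rightarrow> 'a \<Rightarrow> 'a) \<Rightarrow> 'a \<Rightarrow> 'a \<Rightarrow> bool" where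
  "BL_algebra L meet join odot imp zero one \<longleftrightarrow>
     residuated_lattice L meet join odot imp zero one \<and>
     (\<forall>x\<in>L. \<forall>y\<in>L. join (imp x y) (imp y x) = one) \<and>
     (\<forall>x\<in>L. \<forall>y\<in>L. odot x (imp x y) = meet x y)"

end

theory Submission
  imports Defs
begin

locale RL =
  fixes L meet join odot imp zero one
  assumes RL: "residuated_lattice L meet join odot imp zero one"
begin

abbreviation le where "le x y \<equiv> rl_le meet x y"

lemmas RLd = RL[unfolded residuated_lattice_def]

lemma cl: "x\<in>L \<Longrightarrow> y\<in>L \<Longrightarrow> meet x y \<in> L \<and> join x y \<in> L \<and> odot x y \<in> L \<and> imp x y \<in> L"
  using RLd[THEN conjunct2, THEN conjunct2, THEN conjunct1] by blast

lemma one: "one \<in> L"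
  using RLd[THEN conjunct2, THEN conjunct1] by blast

lemma mc: "x\<in>L \<Longrightarrow> y\<in>L \<Longrightarrow> meet x y = meet y x"
  using RLd[THEN conjunct2, THEN conjunct2, THEN conjunct2, THEN conjunct1] by blast

lemma jc: "x\<in>L \<Longrightarrow> y\<in>L \<Longrightarrow> join x y = join y x"
  using RLd[THEN conjunct2, THEN conjunct2, THEN conjunct2, THEN conjunct1] by blast

lemma ma: "x\<in>L \<Longrightarrow> y\<in>L \<Longrightarrow> z\<in>L \<Longrightarrow> meet x (meet y z) = meet (meet x y) z"
  using RLd[THEN conjunct2, THEN conjunct2, THEN conjunct2, THEN conjunct2, THEN conjunct1] by blast

lemma ja: "x\<in>L \<Longrightarrow> y\<in>L \<Longrightarrow> z\<in>L \<Longrightarrow> join x (join y z) = join (join x y) z"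
  using RLd[THEN conjunct2, THEN conjunct2, THEN conjunct2, THEN conjunct2, THEN conjunct1] by blast

lemma ab1: "x\<in>L \<Longrightarrow> y\<in>L \<Longrightarrow> meet x (join x y) = x"
  using RLd[THEN conjunct2, THEN conjunct2, THEN conjunct2, THEN conjunct2, THEN conjunct2, THEN conjunct1] by blast

lemma ab2: "x\<in>L \<Longrightarrow> y\<in>L \<Longrightarrow> join x (meet x y) = x"
  using RLd[THEN conjunct2, THEN conjunct2, THEN conjunct2, THEN conjunct2, THEN conjunct2, THEN conjunct1] by blast

lemma le1: "x\<in>L \<Longrightarrow> le x one"
  using RLd[THEN conjunct2, THEN conjunct2, THEN conjunct2, THEN conjunct2, THEN conjunct2, THEN conjunct2, THEN conjunct1] by blast

lemma oc: "x\<in>L \<Longrightarrow> y\<in>L \<Longrightarrow> odot x y = odot y x"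
  using RLd[THEN conjunct2, THEN conjunct2, THEN conjunct2, THEN conjunct2, THEN conjunct2, THEN conjunct2, THEN conjunct2, THEN conjunct1] by blast

lemma o1: "x\<in>L \<Longrightarrow> odot x one = x"
  using RLd[THEN conjunct2, THEN conjunct2, THEN conjunct2, THEN conjunct2, THEN conjunct2, THEN conjunct2, THEN conjunct2, THEN conjunct2, THEN conjunct2, THEN conjunct1] by blast

lemma om: "x\<in>L \<Longrightarrow> y\<in>L \<Longrightarrow> z\<in>L \<Longrightarrow> le x y \<Longrightarrow> le (odot x z) (odot y z)"
  using RLd[THEN conjunct2, THEN conjunct2, THEN conjunct2, THEN conjunct2, THEN conjunct2, THEN conjunct2, THEN conjunct2, THEN conjunct2, THEN conjunct2, THEN conjunct2, THEN conjunct1] by blast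

lemma res: "x\<in>L \<Longrightarrow> y\<in>L \<Longrightarrow> z\<in>L \<Longrightarrow> le z (imp x y) \<longleftrightarrow> le (odot x z) y"
  using RLd[THEN conjunct2, THEN conjunct2, THEN conjunct2, THEN conjunct2, THEN conjunct2, THEN conjunct2, THEN conjunct2, THEN conjunct2, THEN conjunct2, THEN conjunct2, THEN conjunct2] by blast

lemma oa: "x\<in>L \<Longrightarrow> y\<in>L \<Longrightarrow> z\<in>L \<Longrightarrow> odot x (odot y z) = odot (odot x y) z"
  using RLd[THEN conjunct2, THEN conjunct2, THEN conjunct2, THEN conjunct2, THEN conjunct2, THEN conjunct2, THEN conjunct2, THEN conjunct2, THEN conjunct1] by blast

lemma mcl: "x\<in>L \<Longrightarrow> y\<in>L \<Longrightarrow> meet x y \<in> L" using cl by blast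
lemma jcl: "x\<in>L \<Longrightarrow> y\<in>L \<Longrightarrow> join x y \<in> L" using cl by blast
lemma ocl: "x\<in>L \<Longrightarrow> y\<in>L \<Longrightarrow> odot x y \<in> L" using cl by blast
lemma icl: "x\<in>L \<Longrightarrow> y\<in>L \<Longrightarrow> imp x y \<in> L" using cl by blast

lemma refl: "x\<in>L \<Longrightarrow> le x x"
proof -
  assume x: "x\<in>L"
  have "meet x (join x (meet x x)) = x" by (rule ab1[OF x mcl[OF x x]])
  thus ?thesis using ab2[OF x x] unfolding rl_le_def by simp
qed

lemma antisym: "x\<in>L \<Longrightarrow> y\<in>L \<Longrightarrow> le x y \<Longrightarrow> le y x \<Longrightarrow> x = y"
  unfolding rl_le_def by (drule mc, assumption, simp)

lemma le_join: "x\<in>L \<Longrightarrow> y\<in>L \<Longrightarrow> le x y \<longleftrightarrow> join x y = y"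
proof -
  assume x: "x\<in>L" and y: "y\<in>L"
  show ?thesis
  proof
    assume "le x y"
    hence "meet y x = x" using mc[OF x y] unfolding rl_le_def by simp
    hence "join y (meet y x) = join y x" by simp
    thus "join x y = y" using ab2[OF y x] jc[OF x y] by simp
  next
    assume "join x y = y"
    thus "le x y" using ab1[OF x y] unfolding rl_le_def by simp
  qed
qed

lemma trans: "x\<in>L \<Longrightarrow> y\<in>L \<Longrightarrow> z\<in>L \<Longrightarrow> le x y \<Longrightarrow> le y z \<Longrightarrow> le x z"
  unfolding rl_le_def proof -
  assume h: "x\<in>L" "y\<in>L" "z\<in>L" "meet x y = x" "meet y z = y"
  have "meet x (meet y z) = meet (meet x y) z" by (rule ma[OF h(1-3)])
  thus "meet x z = x" using h(4,5) by simp
qed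

lemma ju1: "x\<in>L \<Longrightarrow> y\<in>L \<Longrightarrow> le x (join x y)"
  unfolding rl_le_def by (rule ab1)

lemma ju2: "x\<in>L \<Longrightarrow> y\<in>L \<Longrightarrow> le y (join x y)"
  unfolding rl_le_def proof -
  assume h: "x\<in>L" "y\<in>L"
  show "meet y (join x y) = y" using ab1[OF h(2,1)] jc[OF h] by simp
qed

lemma jlub: "x\<in>L \<Longrightarrow> y\<in>L \<Longrightarrow> z\<in>L \<Longrightarrow> le x z \<Longrightarrow> le y z \<Longrightarrow> le (join x y) z"
proof -
  assume h: "x\<in>L" "y\<in>L" "z\<in>L" "le x z" "le y z"
  have 1: "join x z = z" using le_join[OF h(1,3)] h(4) by simp
  have 2: "join y z = z" using le_join[OF h(2,3)] h(5) by simp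
  have "join x (join y z) = join (join x y) z" by (rule ja[OF h(1-3)])
  hence "join (join x y) z = z" using 1 2 by simp
  thus ?thesis using le_join[OF jcl[OF h(1,2)] h(3)] by simp
qed

lemma ml1: "x\<in>L \<Longrightarrow> y\<in>L \<Longrightarrow> le (meet x y) x"
  unfolding rl_le_def proof -
  assume h: "x\<in>L" "y\<in>L"
  have "meet x (meet x y) = meet (meet x x) y" by (rule ma[OF h(1,1,2)])
  hence "meet x (meet x y) = meet x y" using refl[OF h(1)] unfolding rl_le_def by simp
  thus "meet (meet x y) x = meet x y" using mc[OF h(1) mcl[OF h]] by simp
qed

lemma ml2: "x\<in>L \<Longrightarrow> y\<in>L \<Longrightarrow> le (meet x y) y"
proof -
  assume h: "x\<in>L" "y\<in>L"
  show ?thesis using ml1[OF h(2,1)] mc[OF h] by simp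
qed

lemma mglb: "x\<in>L \<Longrightarrow> y\<in>L \<Longrightarrow> z\<in>L \<Longrightarrow> le z x \<Longrightarrow> le z y \<Longrightarrow> le z (meet x y)"
  unfolding rl_le_def proof -
  assume h: "x\<in>L" "y\<in>L" "z\<in>L" "meet z x = z" "meet z y = z"
  have "meet z (meet x y) = meet (meet z x) y" by (rule ma[OF h(3,1,2)])
  thus "meet z (meet x y) = z" using h(4,5) by simp
qed

lemma om2: "x\<in>L \<Longrightarrow> y\<in>L \<Longrightarrow> z\<in>L \<Longrightarrow> le x y \<Longrightarrow> le (odot z x) (odot z y)"
proof -
  assume h: "x\<in>L" "y\<in>L" "z\<in>L" "le x y"
  show ?thesis using om[OF h] oc[OF h(1,3)] oc[OF h(2,3)] by simp
qed

lemma mp: "x\<in>L \<Longrightarrow> z\<in>L \<Longrightarrow> le (odot x (imp x z)) z"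
proof -
  assume h: "x\<in>L" "z\<in>L"
  show ?thesis using res[OF h icl[OF h]] refl[OF icl[OF h]] by simp
qed

lemma ii: "x\<in>L \<Longrightarrow> imp x x = one"
proof -
  assume x: "x\<in>L"
  have "le one (imp x x)" using res[OF x x one] o1[OF x] refl[OF x] by simp
  thus ?thesis using antisym[OF icl[OF x x] one le1[OF icl[OF x x]]] by simp
qed

lemma imp_anti: "a\<in>L \<Longrightarrow> b\<in>L \<Longrightarrow> z\<in>L \<Longrightarrow> le a b \<Longrightarrow> le (imp b z) (imp a z)"
proof -
  assume h: "a\<in>L" "b\<in>L" "z\<in>L" "le a b"
  have i: "imp b z \<in> L" using icl[OF h(2,3)] .
  have "le (odot a (imp b z)) (odot b (imp b z))" using om[OF h(1,2) i h(4)] .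
  hence "le (odot a (imp b z)) z" using trans[OF ocl[OF h(1) i] ocl[OF h(2) i] h(3) _ mp[OF h(2,3)]] by simp
  thus ?thesis using res[OF h(1,3) i] by simp
qed

lemma imp_mono: "a\<in>L \<Longrightarrow> b\<in>L \<Longrightarrow> z\<in>L \<Longrightarrow> le a b \<Longrightarrow> le (imp z a) (imp z b)"
proof -
  assume h: "a\<in>L" "b\<in>L" "z\<in>L" "le a b"
  have i: "imp z a \<in> L" using icl[OF h(3,1)] .
  have "le (odot z (imp z a)) b" using trans[OF ocl[OF h(3) i] h(1,2) mp[OF h(3,1)] h(4)] .
  thus ?thesis using res[OF h(3,2) i] by simp
qed

lemma distr: "a\<in>L \<Longrightarrow> b\<in>L \<Longrightarrow> c\<in>L \<Longrightarrow> odot a (join b c) = join (odot a b) (odot a c)"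
proof -
  assume h: "a\<in>L" "b\<in>L" "c\<in>L"
  let ?r = "join (odot a b) (odot a c)"
  have ab: "odot a b \<in> L" using ocl[OF h(1,2)] .
  have ac: "odot a c \<in> L" using ocl[OF h(1,3)] .
  have bc: "join b c \<in> L" using jcl[OF h(2,3)] .
  have r: "?r \<in> L" using jcl[OF ab ac] .
  have ir: "imp a ?r \<in> L" using icl[OF h(1) r] .
  have "le b (imp a ?r)" using res[OF h(1) r h(2)] ju1[OF ab ac] by simp
  moreover have "le c (imp a ?r)" using res[OF h(1) r h(3)] ju2[OF ab ac] by simp
  ultimately have "le (join b c) (imp a ?r)" by (rule jlub[OF h(2,3) ir])
  hence 1: "le (odot a (join b c)) ?r" using res[OF h(1) r bc] by simp
  have "le (odot a b) (odot a (join b c))" using om2[OF h(2) bc h(1) ju1[OF h(2,3)]] .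
  moreover have "le (odot a c) (odot a (join b c))" using om2[OF h(3) bc h(1) ju2[OF h(2,3)]] .
  ultimately have "le ?r (odot a (join b c))" by (rule jlub[OF ab ac ocl[OF h(1) bc]])
  thus ?thesis using antisym[OF ocl[OF h(1) bc] r 1] by simp
qed

end

theorem theorem3p5:
  assumes "residuated_lattice L meet join odot imp zero one"
  shows "BL_algebra L meet join odot imp zero one \<longleftrightarrow>
    (\<forall>x\<in>L. \<forall>y\<in>L. \<forall>z\<in>L.
       imp (odot x (imp x y)) z = join (imp x z) (imp y z))"
proof -
  interpret RL L meet join odot imp zero one by (rule RL.intro[OF assms])
  show ?thesis
  proof
    assume bl: "BL_algebra L meet join odot imp zero one"
    have pl: "\<And>x y. x\<in>L \<Longrightarrow> y\<in>L \<Longrightarrow> join (imp x y) (imp y x) = one"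
      using bl unfolding BL_algebra_def by blast
    have dv: "\<And>x y. x\<in>L \<Longrightarrow> y\<in>L \<Longrightarrow> odot x (imp x y) = meet x y"
      using bl unfolding BL_algebra_def by blast
    show "\<forall>x\<in>L. \<forall>y\<in>L. \<forall>z\<in>L. imp (odot x (imp x y)) z = join (imp x z) (imp y z)"
    proof (intro ballI)
      fix x y z assume h: "x\<in>L" "y\<in>L" "z\<in>L"
      let ?m = "meet x y" let ?a = "imp ?m z"
      have m: "?m \<in> L" using mcl[OF h(1,2)] .
      have a: "?a \<in> L" using icl[OF m h(3)] .
      have i1: "imp x y \<in> L" "imp y x \<in> L" "imp x z \<in> L" "imp y z \<in> L"
        using icl[OF h(1,2)] icl[OF h(2,1)] icl[OF h(1,3)] icl[OF h(2,3)] .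
      have 1: "le (odot ?a (imp x y)) (imp x z)"
      proof -
        have "odot x (odot ?a (imp x y)) = odot x (odot (imp x y) ?a)"
          using oc[OF a i1(1)] by simp
        also have "\<dots> = odot (odot x (imp x y)) ?a" using oa[OF h(1) i1(1) a] .
        also have "\<dots> = odot ?m ?a" using dv[OF h(1,2)] by simp
        finally have "odot x (odot ?a (imp x y)) = odot ?m ?a" .
        hence "le (odot x (odot ?a (imp x y))) z" using mp[OF m h(3)] by simp
        thus ?thesis using res[OF h(1) h(3) ocl[OF a i1(1)]] by simp
      qed
      have 2: "le (odot ?a (imp y x)) (imp y z)"
      proof -
        have "odot y (odot ?a (imp y x)) = odot y (odot (imp y x) ?a)"
          using oc[OF a i1(2)] by simp
        also have "\<dots> = odot (odot y (imp y x)) ?a" using oa[OF h(2) i1(2) a] .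
        also have "\<dots> = odot ?m ?a" using dv[OF h(2,1)] mc[OF h(1,2)] by simp
        finally have "odot y (odot ?a (imp y x)) = odot ?m ?a" .
        hence "le (odot y (odot ?a (imp y x))) z" using mp[OF m h(3)] by simp
        thus ?thesis using res[OF h(2) h(3) ocl[OF a i1(2)]] by simp
      qed
      have "?a = odot ?a (join (imp x y) (imp y x))" by (simp add: pl[OF h(1,2)] o1[OF a])
      also have "\<dots> = join (odot ?a (imp x y)) (odot ?a (imp y x))"
        using distr[OF a i1(1,2)] .
      finally have aj: "?a = join (odot ?a (imp x y)) (odot ?a (imp y x))" .
      have j: "join (imp x z) (imp y z) \<in> L" using jcl[OF i1(3,4)] .
      have "le (odot ?a (imp x y)) (join (imp x z) (imp y z))"
        using trans[OF ocl[OF a i1(1)] i1(3) j 1 ju1[OF i1(3,4)]] .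
      moreover have "le (odot ?a (imp y x)) (join (imp x z) (imp y z))"
        using trans[OF ocl[OF a i1(2)] i1(4) j 2 ju2[OF i1(3,4)]] .
      ultimately have "le (join (odot ?a (imp x y)) (odot ?a (imp y x))) (join (imp x z) (imp y z))"
        by (rule jlub[OF ocl[OF a i1(1)] ocl[OF a i1(2)] j])
      hence le_a: "le ?a (join (imp x z) (imp y z))" using aj by simp
      have "le (imp x z) ?a" using imp_anti[OF m h(1) h(3) ml1[OF h(1,2)]] .
      moreover have "le (imp y z) ?a" using imp_anti[OF m h(2) h(3) ml2[OF h(1,2)]] .
      ultimately have "le (join (imp x z) (imp y z)) ?a"
        by (rule jlub[OF i1(3,4) a])
      hence "?a = join (imp x z) (imp y z)"
        using antisym[OF a j le_a] by simp
      thus "imp (odot x (imp x y)) z = join (imp x z) (imp y z)"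
        using dv[OF h(1,2)] by simp
    qed
  next
    assume id: "\<forall>x\<in>L. \<forall>y\<in>L. \<forall>z\<in>L. imp (odot x (imp x y)) z = join (imp x z) (imp y z)"
    have dv: "odot x (imp x y) = meet x y" if h: "x\<in>L" "y\<in>L" for x y
    proof -
      let ?z = "odot x (imp x y)"
      have z: "?z \<in> L" using ocl[OF h(1) icl[OF h(1,2)]] .
      have ix: "imp x ?z \<in> L" using icl[OF h(1) z] .
      have iy: "imp y ?z \<in> L" using icl[OF h(2) z] .
      have "imp ?z ?z = join (imp x ?z) (imp y ?z)" using id h z by blast
      hence e: "join (imp x ?z) (imp y ?z) = one" using ii[OF z] by simp
      let ?m = "meet x y"
      have m: "?m \<in> L" using mcl[OF h(1,2)] .
      have "?m = odot ?m (join (imp x ?z) (imp y ?z))" using e o1[OF m] by simp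
      also have "\<dots> = join (odot ?m (imp x ?z)) (odot ?m (imp y ?z))"
        using distr[OF m ix iy] .
      finally have eq: "?m = join (odot ?m (imp x ?z)) (odot ?m (imp y ?z))" .
      have "le (odot ?m (imp x ?z)) (odot x (imp x ?z))"
        using om[OF m h(1) ix ml1[OF h(1,2)]] .
      hence 1: "le (odot ?m (imp x ?z)) ?z"
        using trans[OF ocl[OF m ix] ocl[OF h(1) ix] z _ mp[OF h(1) z]] by simp
      have "le (odot ?m (imp y ?z)) (odot y (imp y ?z))"
        using om[OF m h(2) iy ml2[OF h(1,2)]] .
      hence 2: "le (odot ?m (imp y ?z)) ?z"
        using trans[OF ocl[OF m iy] ocl[OF h(2) iy] z _ mp[OF h(2) z]] by simp
      have "le (join (odot ?m (imp x ?z)) (odot ?m (imp y ?z))) ?z"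
        using jlub[OF ocl[OF m ix] ocl[OF m iy] z 1 2] .
      hence l1: "le ?m ?z" using eq by simp
      have "le (imp x y) one" using le1[OF icl[OF h(1,2)]] .
      hence "le ?z (odot x one)" using om2[OF icl[OF h(1,2)] one h(1)] by simp
      hence zx: "le ?z x" using o1[OF h(1)] by simp
      have zy: "le ?z y" using mp[OF h(1,2)] .
      have "le ?z ?m" using mglb[OF h(1,2) z zx zy] .
      thus ?thesis using antisym[OF z m _ l1] by simp
    qed
    have pl: "join (imp x y) (imp y x) = one" if h: "x\<in>L" "y\<in>L" for x y
    proof -
      let ?m = "meet x y"
      have m: "?m \<in> L" using mcl[OF h(1,2)] .
      have "imp (odot x (imp x y)) ?m = join (imp x ?m) (imp y ?m)" using id h m by blast
      hence o: "one = join (imp x ?m) (imp y ?m)" using dv[OF h] ii[OF m] by simp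
      have l1: "le (imp x ?m) (imp x y)" using imp_mono[OF m h(2) h(1) ml2[OF h(1,2)]] .
      have l2: "le (imp y ?m) (imp y x)" using imp_mono[OF m h(1) h(2) ml1[OF h(1,2)]] .
      have i1: "imp x y \<in> L" "imp y x \<in> L" "imp x ?m \<in> L" "imp y ?m \<in> L"
        using icl[OF h(1,2)] icl[OF h(2,1)] icl[OF h(1) m] icl[OF h(2) m] .
      have j: "join (imp x y) (imp y x) \<in> L" using jcl[OF i1(1,2)] .
      have "le (join (imp x ?m) (imp y ?m)) (join (imp x y) (imp y x))"
        using jlub[OF i1(3,4) j trans[OF i1(3) i1(1) j l1 ju1[OF i1(1,2)]] trans[OF i1(4) i1(2) j l2 ju2[OF i1(1,2)]]] .
      hence "le one (join (imp x y) (imp y x))" using o by simp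
      thus ?thesis using antisym[OF j one le1[OF j]] by simp
    qed
    show "BL_algebra L meet join odot imp zero one"
      unfolding BL_algebra_def using assms dv pl by blast
  qed
qed

end
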